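(* Let $(K,L)$ and $(K',L')$ be pairs consisting of a finite simplicial set and a simplicial subset, and let $r,s\geq 0$. Let $\mu^{K,K'}:\mathbb{Z}^{\mathrm{sd}^rK}\otimes\mathbb{Z}^{\mathrm{sd}^sK'}\to\mathbb{Z}^{\mathrm{sd}^{r+s}(K\times K')}$ be the ring homomorphism \[\mu^{K,K'}=\mathbf{m}\circ\big((\mathrm{pr}_1)^*\otimes(\mathrm{pr}_2)^*\big)\circ\big((\gamma^s_{\mathrm{sd}^rK})^*\otimes(\gamma^r_{\mathrm{sd}^sK'})^*\big),\] where $(\gamma^s_{\mathrm{sd}^r K})^*:\mathbb{Z}^{\mathrm{sd}^rK}\to\mathbb{Z}^{\mathrm{sd}^{r+s}K}$ and $(\gamma^r_{\mathrm{sd}^sK'})^*:\mathbb{Z}^{\mathrm{sd}^sK'}\to\mathbb{Z}^{\mathrm{sd}^{r+s}K'}$ are induced by the iterated last vertex maps, $\mathrm{pr}_1,\mathrm{pr}_2$ are the projections $\mathrm{sd}^{r+s}(K\times K')\to\mathrm{sd}^{r+s}K$, $\mathrm{sd}^{r+s}K'$ (i.e. $\mathrm{sd}^{r+s}$ applied to the projections of $K\times K'$), and $\mathbf{m}$ is the multiplication of the commutative ring $\mathbb{Z}^{\mathrm{sd}^{r+s}(K\times K')}$. Regard $\mathbb{Z}^{(K,L)}_r\otimes\mathbb{Z}^{(K',L')}_s$ as a subring of $\mathbb{Z}^{\mathrm{sd}^rK}\otimes\mathbb{Z}^{\mathrm{sd}^sK'}$. Then $\mu^{K,K'}$ maps $\mathbb{Z}^{(K,L)}_r\otimes\mathbb{Z}^{(K',L')}_s$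 into $\mathbb{Z}^{(K\times K',(K\times L')\cup(L\times K'))}_{r+s}$, hence restricts to a ring homomorphism \[\mu^{(K,L),(K',L')}:\mathbb{Z}^{(K,L)}_r\otimes\mathbb{Z}^{(K',L')}_s\to\mathbb{Z}^{(K\times K',(K\times L')\cup(L\times K'))}_{r+s},\] and this homomorphism is natural in both pairs with respect to morphisms of pairs (maps of simplicial sets $f:K_1\to K$ with $f(L_1)\subseteq L$).
   Context: $\mathbb{Z}^\Delta$ is the simplicial commutative ring $[p]\mapsto \mathbb{Z}[t_0,\dots,t_p]/\langle 1-\sum t_i\rangle$ (an order preserving $\varphi:[p]\to[q]$ acts by $t_i\mapsto\sum_{\varphi(j)=i}t_j$); for a simplicial set $X$, $\mathbb{Z}^X:=\mathrm{Hom}_{\mathbb{S}}(X,\mathbb{Z}^\Delta)$ with pointwise operations, a commutative ring, contravariant in $X$. $\mathrm{sd}$ is the subdivision functor and $\gamma^n:\mathrm{sd}^n\to\mathrm{id}$ the $n$-fold iterated last vertex map ($\gamma^0=\mathrm{id}$, $\gamma^n_X=\gamma^{n-1}_X\circ\gamma_{\mathrm{sd}^{n-1}X}$). For a finite simplicial set $K$ and simplicial subset $L$, $\mathbb{Z}^{(K,L)}_r:=\ker(\mathbb{Z}^{\mathrm{sd}^rK}\to\mathbb{Z}^{\mathrm{sd}^rL})$; it is a direct summand of the free abelian group $\mathbb{Z}^{\mathrm{sd}^rK}$, so the tensor product of such kernels embeds in the tensor product of the ambient rings. *)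

theory Defs
  imports "HOL-Library.FuncSet"
begin

text \<open>A monotone map phi : [p] -> [q], represented by a function on nat
  (only its values on {0..p} matter).\<close>
definition mono_map :: "nat \<Rightarrow> nat \<Rightarrow> (nat \<Rightarrow> nat) \<Rightarrow> bool" where
  "mono_map p q \<phi> \<longleftrightarrow> (\<forall>i\<le>p. \<phi> i \<le> q) \<and> (\<forall>i j. i \<le> j \<longrightarrow> j \<le> p \<longrightarrow> \<phi> i \<le> \<phi> j)"

text \<open>simp X q = set of q-simplices; act X phi p q x = phi^* x for phi:[p]->[q], x in X_q.\<close>
record 'a sset =
  simp :: "nat \<Rightarrow> 'a set"
  act :: "(nat \<Rightarrow> nat) \<Rightarrow> nat \<Rightarrow> nat \<Rightarrow> 'a \<Rightarrow> 'a"

definition is_sset :: "'a sset \<Rightarrow> bool" where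
  "is_sset X \<longleftrightarrow>
     (\<forall>p q \<phi> x. mono_map p q \<phi> \<longrightarrow> x \<in> simp X q \<longrightarrow> act X \<phi> p q x \<in> simp X p) \<and>
     (\<forall>q x. x \<in> simp X q \<longrightarrow> act X id q q x = x) \<and>
     (\<forall>m p q \<phi> \<psi> x. mono_map p q \<phi> \<longrightarrow> mono_map m p \<psi> \<longrightarrow> x \<in> simp X q \<longrightarrow>
         act X \<psi> m p (act X \<phi> p q x) = act X (\<phi> \<circ> \<psi>) m q x) \<and>
     (\<forall>p q \<phi> \<phi>' x. (\<forall>i\<le>p. \<phi> i = \<phi>' i) \<longrightarrow> act X \<phi> p q x = act X \<phi>' p q x)"

definition nondeg :: "'a sset \<Rightarrow> nat \<Rightarrow> 'a \<Rightarrow> bool" where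
  "nondeg X n x \<longleftrightarrow> x \<in> simp X n \<and>
     \<not> (\<exists>m<n. \<exists>\<sigma> y. mono_map n m \<sigma> \<and> \<sigma> ` {..n} = {..m} \<and> y \<in> simp X m \<and> x = act X \<sigma> n m y)"

definition finite_sset :: "'a sset \<Rightarrow> bool" where
  "finite_sset X \<longleftrightarrow> is_sset X \<and> finite {(n, x). nondeg X n x}"

definition subsset :: "(nat \<Rightarrow> 'a set) \<Rightarrow> 'a sset \<Rightarrow> bool" where
  "subsset L X \<longleftrightarrow> (\<forall>n. L n \<subseteq> simp X n) \<and>
     (\<forall>p q \<phi> x. mono_map p q \<phi> \<longrightarrow> x \<in> L q \<longrightarrow> act X \<phi> p q x \<in> L p)"

definition subs :: "'a sset \<Rightarrow> (nat \<Rightarrow> 'a set) \<Rightarrow> 'a sset" where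
  "subs X L = \<lparr>simp = L, act = act X\<rparr>"

definition smap :: "'a sset \<Rightarrow> 'b sset \<Rightarrow> (nat \<Rightarrow> 'a \<Rightarrow> 'b) \<Rightarrow> bool" where
  "smap X Y f \<longleftrightarrow> (\<forall>n x. x \<in> simp X n \<longrightarrow> f n x \<in> simp Y n) \<and>
     (\<forall>p q \<phi> x. mono_map p q \<phi> \<longrightarrow> x \<in> simp X q \<longrightarrow>
        f p (act X \<phi> p q x) = act Y \<phi> p q (f q x))"

definition sprod :: "'a sset \<Rightarrow> 'b sset \<Rightarrow> ('a \<times> 'b) sset" where
  "sprod X Y = \<lparr>simp = (\<lambda>n. simp X n \<times> simp Y n),
     act = (\<lambda>\<phi> p q z. (act X \<phi> p q (fst z), act Y \<phi> p q (snd z)))\<rparr>"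

definition prod_map :: "(nat \<Rightarrow> 'a \<Rightarrow> 'c) \<Rightarrow> (nat \<Rightarrow> 'b \<Rightarrow> 'd) \<Rightarrow> nat \<Rightarrow> 'a \<times> 'b \<Rightarrow> 'c \<times> 'd" where
  "prod_map f g = (\<lambda>n z. (f n (fst z), g n (snd z)))"

text \<open>Universal carrier type closed under subdivision: Sd n x c stands for the
  class of (x in X_n, c a simplex of sd Delta^n) in the colimit defining sd X.\<close>
datatype 'a ssimp = Base 'a | Sd nat "'a ssimp" "nat set list"

fun unBase :: "'a ssimp \<Rightarrow> 'a" where
  "unBase (Base a) = a"
| "unBase _ = undefined"

definition lift :: "'a sset \<Rightarrow> 'a ssimp sset" where
  "lift X = \<lparr>simp = (\<lambda>n. Base ` simp X n),
     act = (\<lambda>\<phi> p q x. Base (act X \<phi> p q (unBase x)))\<rparr>"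

definition liftmap :: "(nat \<Rightarrow> 'a \<Rightarrow> 'b) \<Rightarrow> nat \<Rightarrow> 'a ssimp \<Rightarrow> 'b ssimp" where
  "liftmap f = (\<lambda>n x. Base (f n (unBase x)))"

text \<open>p-simplices of sd Delta^n = nerve of the poset of nonempty subsets of [n]:
  chains c_0 \<subseteq> ... \<subseteq> c_p.\<close>
definition sdD :: "nat \<Rightarrow> nat \<Rightarrow> nat set list set" where
  "sdD n p = {c. length c = Suc p \<and> (\<forall>i<Suc p. c ! i \<noteq> {} \<and> c ! i \<subseteq> {..n}) \<and>
                 (\<forall>i j. i \<le> j \<longrightarrow> j < Suc p \<longrightarrow> c ! i \<subseteq> c ! j)}"

text \<open>Generating relation of the colimit sd X = colim_{Delta^n -> X} sd Delta^n (level p):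
  (m, theta^* x, c) ~ (n, x, theta_* c) for theta : [m] -> [n].\<close>
definition sd_rel :: "'a ssimp sset \<Rightarrow> nat \<Rightarrow> (nat \<times> 'a ssimp \<times> nat set list) \<Rightarrow>
    (nat \<times> 'a ssimp \<times> nat set list) \<Rightarrow> bool" where
  "sd_rel X p u v \<longleftrightarrow> (\<exists>m n y x c \<theta>. u = (m, y, c) \<and> v = (n, x, map (\<lambda>S. \<theta> ` S) c) \<and>
      mono_map m n \<theta> \<and> x \<in> simp X n \<and> y = act X \<theta> m n x \<and> c \<in> sdD m p)"

text \<open>Chosen representative of the equivalence class (depends only on the class).\<close>
definition cls :: "'a ssimp sset \<Rightarrow> nat \<Rightarrow> nat \<times> 'a ssimp \<times> nat set list \<Rightarrow> 'a ssimp" where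
  "cls X p u = (case (SOME v. equivclp (sd_rel X p) u v) of (n, x, c) \<Rightarrow> Sd n x c)"

definition sd :: "'a ssimp sset \<Rightarrow> 'a ssimp sset" where
  "sd X = \<lparr>simp = (\<lambda>p. {cls X p (n, x, c) | n x c. x \<in> simp X n \<and> c \<in> sdD n p}),
     act = (\<lambda>\<psi> m p s. case s of Sd n x c \<Rightarrow> cls X m (n, x, map (\<lambda>i. c ! \<psi> i) [0..<Suc m])
                                | Base _ \<Rightarrow> undefined)\<rparr>"

text \<open>sd f for f : X -> Y (Y the target).\<close>
definition sd_map :: "'b ssimp sset \<Rightarrow> (nat \<Rightarrow> 'a ssimp \<Rightarrow> 'b ssimp) \<Rightarrow> nat \<Rightarrow> 'a ssimp \<Rightarrow> 'b ssimp" where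
  "sd_map Y f = (\<lambda>p s. case s of Sd n x c \<Rightarrow> cls Y p (n, f n x, c) | Base _ \<Rightarrow> undefined)"

text \<open>Last vertex map gamma_X : sd X -> X, induced by S \<mapsto> max S on sd Delta^n -> Delta^n.\<close>
definition lastv :: "'a ssimp sset \<Rightarrow> nat \<Rightarrow> 'a ssimp \<Rightarrow> 'a ssimp" where
  "lastv X = (\<lambda>p s. case s of Sd n x c \<Rightarrow> act X (\<lambda>i. Max (c ! i)) p n x | Base _ \<Rightarrow> undefined)"

definition sdn :: "nat \<Rightarrow> 'a ssimp sset \<Rightarrow> 'a ssimp sset" where
  "sdn r X = (sd ^^ r) X"

fun sdmapn :: "nat \<Rightarrow> 'b ssimp sset \<Rightarrow> (nat \<Rightarrow> 'a ssimp \<Rightarrow> 'b ssimp) \<Rightarrow> nat \<Rightarrow> 'a ssimp \<Rightarrow> 'b ssimp" where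
  "sdmapn 0 Y f = f"
| "sdmapn (Suc r) Y f = sd_map (sdn r Y) (sdmapn r Y f)"

fun gam :: "nat \<Rightarrow> 'a ssimp sset \<Rightarrow> nat \<Rightarrow> 'a ssimp \<Rightarrow> 'a ssimp" where
  "gam 0 X = (\<lambda>p x. x)"
| "gam (Suc n) X = (\<lambda>p s. gam n X p (lastv (sdn n X) p s))"

text \<open>Z[t_0..t_p]/(1 - sum t_i) is modelled as the ring of integer polynomial functions on
  the integral points of the hyperplane sum t_i = 1 in Z^{p+1}.\<close>
definition hyper :: "nat \<Rightarrow> (nat \<Rightarrow> int) set" where
  "hyper p = {t. (\<forall>i>p. t i = 0) \<and> (\<Sum>i\<le>p. t i) = 1}"

inductive_set polyfun :: "nat \<Rightarrow> ((nat \<Rightarrow> int) \<Rightarrow> int) set" for k :: nat where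
  pf_const: "(\<lambda>t. c) \<in> polyfun k"
| pf_var: "i < k \<Longrightarrow> (\<lambda>t. t i) \<in> polyfun k"
| pf_add: "F \<in> polyfun k \<Longrightarrow> G \<in> polyfun k \<Longrightarrow> (\<lambda>t. F t + G t) \<in> polyfun k"
| pf_mult: "F \<in> polyfun k \<Longrightarrow> G \<in> polyfun k \<Longrightarrow> (\<lambda>t. F t * G t) \<in> polyfun k"

definition ZD :: "nat \<Rightarrow> ((nat \<Rightarrow> int) \<Rightarrow> int) set" where
  "ZD p = {restrict F (hyper p) | F. F \<in> polyfun (Suc p)}"

definition push :: "(nat \<Rightarrow> nat) \<Rightarrow> nat \<Rightarrow> (nat \<Rightarrow> int) \<Rightarrow> nat \<Rightarrow> int" where
  "push \<phi> p u = (\<lambda>i. \<Sum>j\<in>{j. j \<le> p \<and> \<phi> j = i}. u j)"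

definition ZDelta :: "((nat \<Rightarrow> int) \<Rightarrow> int) sset" where
  "ZDelta = \<lparr>simp = ZD, act = (\<lambda>\<phi> p q F. restrict (\<lambda>u. F (push \<phi> p u)) (hyper p))\<rparr>"

text \<open>Z^X = Hom(X, Z^Delta) (extensional representatives).\<close>
definition zfun :: "'a sset \<Rightarrow> (nat \<Rightarrow> 'a \<Rightarrow> (nat \<Rightarrow> int) \<Rightarrow> int) set" where
  "zfun X = {g. smap X ZDelta g \<and> (\<forall>n x. x \<notin> simp X n \<longrightarrow> g n x = undefined)}"

definition zmul :: "'a sset \<Rightarrow> (nat \<Rightarrow> 'a \<Rightarrow> (nat \<Rightarrow> int) \<Rightarrow> int) \<Rightarrow>
    (nat \<Rightarrow> 'a \<Rightarrow> (nat \<Rightarrow> int) \<Rightarrow> int) \<Rightarrow> nat \<Rightarrow> 'a \<Rightarrow> (nat \<Rightarrow> int) \<Rightarrow> int" where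
  "zmul X g h = (\<lambda>n x. if x \<in> simp X n then restrict (\<lambda>t. g n x t * h n x t) (hyper n) else undefined)"

definition zzero :: "'a sset \<Rightarrow> nat \<Rightarrow> 'a \<Rightarrow> (nat \<Rightarrow> int) \<Rightarrow> int" where
  "zzero X = (\<lambda>n x. if x \<in> simp X n then restrict (\<lambda>t. 0) (hyper n) else undefined)"

definition pullback :: "'a sset \<Rightarrow> (nat \<Rightarrow> 'a \<Rightarrow> 'b) \<Rightarrow> (nat \<Rightarrow> 'b \<Rightarrow> (nat \<Rightarrow> int) \<Rightarrow> int) \<Rightarrow>
    nat \<Rightarrow> 'a \<Rightarrow> (nat \<Rightarrow> int) \<Rightarrow> int" where
  "pullback X f g = (\<lambda>n x. if x \<in> simp X n then g n (f n x) else undefined)"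

definition zrel :: "nat \<Rightarrow> 'a sset \<Rightarrow> (nat \<Rightarrow> 'a set) \<Rightarrow> (nat \<Rightarrow> 'a ssimp \<Rightarrow> (nat \<Rightarrow> int) \<Rightarrow> int) set" where
  "zrel r K L = {a \<in> zfun (sdn r (lift K)).
      pullback (sdn r (lift (subs K L))) (sdmapn r (lift K) (\<lambda>n x. x)) a = zzero (sdn r (lift (subs K L)))}"

definition mu :: "nat \<Rightarrow> nat \<Rightarrow> 'a sset \<Rightarrow> 'b sset \<Rightarrow>
    (nat \<Rightarrow> 'a ssimp \<Rightarrow> (nat \<Rightarrow> int) \<Rightarrow> int) \<Rightarrow> (nat \<Rightarrow> 'b ssimp \<Rightarrow> (nat \<Rightarrow> int) \<Rightarrow> int) \<Rightarrow>
    nat \<Rightarrow> ('a \<times> 'b) ssimp \<Rightarrow> (nat \<Rightarrow> int) \<Rightarrow> int" where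
  "mu r s K K' a b =
     (let P = sdn (r + s) (lift (sprod K K'));
          pr1 = sdmapn (r + s) (lift K) (liftmap (\<lambda>n. fst));
          pr2 = sdmapn (r + s) (lift K') (liftmap (\<lambda>n. snd));
          a' = pullback (sdn s (sdn r (lift K))) (gam s (sdn r (lift K))) a;
          b' = pullback (sdn r (sdn s (lift K'))) (gam r (sdn s (lift K'))) b
      in zmul P (pullback P pr1 a') (pullback P pr2 b'))"

definition pair_union :: "'a sset \<Rightarrow> (nat \<Rightarrow> 'a set) \<Rightarrow> 'b sset \<Rightarrow> (nat \<Rightarrow> 'b set) \<Rightarrow> nat \<Rightarrow> ('a \<times> 'b) set" where
  "pair_union K L K' L' = (\<lambda>n. (simp K n \<times> L' n) \<union> (L n \<times> simp K' n))"

end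

theory Submission
  imports Defs
begin

lemma E_rep: "equivclp (sd_rel X p) u (SOME v. equivclp (sd_rel X p) u v)"
  by (rule someI[where x=u]) (simp add: equivclp_def)

lemma E_some_eq: "equivclp R u v \<Longrightarrow> (SOME w. equivclp R u w) = (SOME w. equivclp R v w)"
proof -
  assume h: "equivclp R u v"
  have "(\<lambda>w. equivclp R u w) = (\<lambda>w. equivclp R v w)"
  proof
    fix w show "equivclp R u w = equivclp R v w"
      using h equivclp_sym[OF h] transpD[OF transp_equivclp] by metis
  qed
  then show ?thesis by simp
qed

lemma cls_eq: "equivclp (sd_rel X p) u v \<Longrightarrow> cls X p u = cls X p v"
  unfolding cls_def using E_some_eq by metis

lemma cls_destr: "\<exists>n x c. cls X p u = Sd n x c \<and> equivclp (sd_rel X p) u (n, x, c)"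
  using E_rep[of X p u] unfolding cls_def
  by (cases "SOME v. equivclp (sd_rel X p) u v") auto

lemma E_inv:
  assumes "equivclp R u v" "\<And>a b. R a b \<Longrightarrow> F a = F b"
  shows "F u = F v"
  using assms(1) by (induction rule: equivclp_induct) (auto dest: assms(2))

lemma is_ssetD1: "is_sset X \<Longrightarrow> mono_map p q \<phi> \<Longrightarrow> x \<in> simp X q \<Longrightarrow> act X \<phi> p q x \<in> simp X p"
  unfolding is_sset_def by blast
lemma is_ssetD2: "is_sset X \<Longrightarrow> x \<in> simp X q \<Longrightarrow> act X id q q x = x"
  unfolding is_sset_def by blast
lemma is_ssetD3: "is_sset X \<Longrightarrow> mono_map p q \<phi> \<Longrightarrow> mono_map m p \<psi> \<Longrightarrow> x \<in> simp X q \<Longrightarrow>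
         act X \<psi> m p (act X \<phi> p q x) = act X (\<phi> \<circ> \<psi>) m q x"
  unfolding is_sset_def by blast
lemma is_ssetD4: "is_sset X \<Longrightarrow> (\<forall>i\<le>p. \<phi> i = \<phi>' i) \<Longrightarrow> act X \<phi> p q x = act X \<phi>' p q x"
  unfolding is_sset_def by blast

lemma sdD_push: "mono_map m n \<theta> \<Longrightarrow> c \<in> sdD m p \<Longrightarrow> map ((`) \<theta>) c \<in> sdD n p"
  unfolding sdD_def mono_map_def by (auto 0 3 simp: image_mono)

lemma sdD_restr: "mono_map m p \<psi> \<Longrightarrow> c \<in> sdD n p \<Longrightarrow> map (\<lambda>i. c ! \<psi> i) [0..<Suc m] \<in> sdD n m"
  unfolding sdD_def mono_map_def
  apply (clarsimp simp del: upt_Suc)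
  apply (intro conjI allI impI)
    apply (simp add: less_Suc_eq_le)
   apply (simp add: less_Suc_eq_le)
  apply (subgoal_tac "\<psi> i \<le> \<psi> j \<and> \<psi> j < Suc p")
   apply simp
  apply (simp add: less_Suc_eq_le)
  done

lemma sdD_fin: "c \<in> sdD n p \<Longrightarrow> i \<le> p \<Longrightarrow> finite (c ! i) \<and> c ! i \<noteq> {} \<and> c ! i \<subseteq> {..n}"
proof -
  assume a: "c \<in> sdD n p" "i \<le> p"
  then have "c ! i \<noteq> {} \<and> c ! i \<subseteq> {..n}" unfolding sdD_def by (simp add: less_Suc_eq_le)
  then show ?thesis using finite_subset by blast
qed

lemma mono_Max: "c \<in> sdD n p \<Longrightarrow> mono_map p n (\<lambda>i. Max (c ! i))"
  unfolding mono_map_def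
proof (intro conjI allI impI)
  fix i assume "c \<in> sdD n p" "i \<le> p"
  then show "Max (c ! i) \<le> n" using sdD_fin[of c n p i] by auto
next
  fix i j assume a: "c \<in> sdD n p" "i \<le> j" "j \<le> p"
  then have "c ! i \<subseteq> c ! j" unfolding sdD_def by auto
  then show "Max (c ! i) \<le> Max (c ! j)" using sdD_fin[OF a(1), of i] sdD_fin[OF a(1), of j] a
    by (meson Max_mono le_trans)
qed

lemma Max_push: "mono_map m n \<theta> \<Longrightarrow> S \<subseteq> {..m} \<Longrightarrow> S \<noteq> {} \<Longrightarrow> finite S \<Longrightarrow> Max (\<theta> ` S) = \<theta> (Max S)"
proof -
  assume a: "mono_map m n \<theta>" "S \<subseteq> {..m}" "S \<noteq> {}" "finite S"
  have "Max S \<in> S" using a by simp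
  moreover have "\<forall>s\<in>S. \<theta> s \<le> \<theta> (Max S)"
  proof
    fix s assume "s \<in> S"
    then have "s \<le> Max S" using a by simp
    moreover have "Max S \<le> m" using \<open>Max S \<in> S\<close> a(2) by auto
    ultimately show "\<theta> s \<le> \<theta> (Max S)" using a(1) unfolding mono_map_def by auto
  qed
  ultimately show ?thesis using a by (intro Max_eqI) auto
qed

definition valid :: "'a ssimp sset \<Rightarrow> nat \<Rightarrow> nat \<times> 'a ssimp \<times> nat set list \<Rightarrow> bool" where
  "valid X p u = (case u of (n, x, c) \<Rightarrow> x \<in> simp X n \<and> c \<in> sdD n p)"

lemma rel_valid: "is_sset X \<Longrightarrow> sd_rel X p u v \<Longrightarrow> valid X p u \<and> valid X p v"
  unfolding sd_rel_def valid_def by (auto intro: is_ssetD1 sdD_push)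

lemma E_valid: "is_sset X \<Longrightarrow> equivclp (sd_rel X p) u v \<Longrightarrow> valid X p u \<Longrightarrow> valid X p v"
  by (rotate_tac, induction rule: equivclp_induct) (auto dest: rel_valid)

lemma sd_simpE:
  assumes "is_sset X" "s \<in> simp (sd X) p"
  obtains n x c where "s = Sd n x c" "x \<in> simp X n" "c \<in> sdD n p" "cls X p (n, x, c) = s"
proof -
  obtain n0 x0 c0 where u: "s = cls X p (n0, x0, c0)" "x0 \<in> simp X n0" "c0 \<in> sdD n0 p"
    using assms(2) unfolding sd_def by auto
  obtain n x c where h: "cls X p (n0, x0, c0) = Sd n x c" "equivclp (sd_rel X p) (n0, x0, c0) (n, x, c)"
    using cls_destr by blast
  have "valid X p (n, x, c)" using E_valid[OF assms(1) h(2)] u unfolding valid_def by auto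
  moreover have "cls X p (n, x, c) = s" using cls_eq[OF h(2)] u by simp
  ultimately show ?thesis using that h u unfolding valid_def by auto
qed

lemma cls_case:
  assumes "\<And>a b. sd_rel X p a b \<Longrightarrow> F a = F b"
  shows "(case cls X p u of Sd n x c \<Rightarrow> F (n, x, c) | Base _ \<Rightarrow> undefined) = F u"
proof -
  obtain n x c where h: "cls X p u = Sd n x c" "equivclp (sd_rel X p) u (n, x, c)"
    using cls_destr by blast
  show ?thesis using h E_inv[OF h(2), of F] assms by simp
qed

lemma cls_case3:
  assumes "\<And>a b. sd_rel X p a b \<Longrightarrow> (case a of (n, x, c) \<Rightarrow> F n x c) = (case b of (n, x, c) \<Rightarrow> F n x c)"
  shows "(case cls X p (n, x, c) of Sd n' x' c' \<Rightarrow> F n' x' c' | Base _ \<Rightarrow> undefined) = F n x c"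
proof -
  obtain n' x' c' where h: "cls X p (n, x, c) = Sd n' x' c'" "equivclp (sd_rel X p) (n, x, c) (n', x', c')"
    using cls_destr by blast
  show ?thesis using h E_inv[OF h(2), of "\<lambda>(n, x, c). F n x c"] assms by simp
qed

lemma rel_cls: "sd_rel X p a b \<Longrightarrow> cls X p a = cls X p b"
  by (rule cls_eq, unfold equivclp_def, rule r_into_rtranclp, simp add: symclp_def)

declare upt_Suc[simp del]

lemma smapD1: "smap X Y f \<Longrightarrow> x \<in> simp X n \<Longrightarrow> f n x \<in> simp Y n"
  unfolding smap_def by blast
lemma smapD2: "smap X Y f \<Longrightarrow> mono_map p q \<phi> \<Longrightarrow> x \<in> simp X q \<Longrightarrow>
        f p (act X \<phi> p q x) = act Y \<phi> p q (f q x)"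
  unfolding smap_def by blast

lemma smap_comp: "smap X Y f \<Longrightarrow> smap Y Z g \<Longrightarrow> smap X Z (\<lambda>n x. g n (f n x))"
  unfolding smap_def by simp

lemma smap_cong: "is_sset X \<Longrightarrow> smap X Y f \<Longrightarrow> (\<And>n x. x \<in> simp X n \<Longrightarrow> k n x = f n x) \<Longrightarrow> smap X Y k"
  unfolding smap_def by (simp add: is_ssetD1)

lemma sd_map_cls:
  assumes "smap X Y f"
  shows "sd_map Y f p (cls X p (n, x, c)) = cls Y p (n, f n x, c)"
proof -
  let ?F = "\<lambda>(n, x, c). cls Y p (n, f n x, c)"
  have "\<And>a b. sd_rel X p a b \<Longrightarrow> ?F a = ?F b"
  proof -
    fix a b assume "sd_rel X p a b"
    then obtain m n y x c \<theta> where h: "a = (m, y, c)" "b = (n, x, map (\<lambda>S. \<theta> ` S) c)"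
      "mono_map m n \<theta>" "x \<in> simp X n" "y = act X \<theta> m n x" "c \<in> sdD m p"
      unfolding sd_rel_def by blast
    have "f m y = act Y \<theta> m n (f n x)" using h smapD2[OF assms] by simp
    moreover have "f n x \<in> simp Y n" using h smapD1[OF assms] by simp
    ultimately have "sd_rel Y p (m, f m y, c) (n, f n x, map (\<lambda>S. \<theta> ` S) c)"
      unfolding sd_rel_def using h by blast
    then show "?F a = ?F b" using h rel_cls by simp
  qed
  from cls_case3[of X p "\<lambda>n x c. cls Y p (n, f n x, c)", OF this] show ?thesis
    unfolding sd_map_def by simp
qed

lemma lastv_cls:
  assumes "is_sset X"
  shows "lastv X p (cls X p (n, x, c)) = act X (\<lambda>i. Max (c ! i)) p n x"
proof -
  let ?F = "\<lambda>(n, x, c). act X (\<lambda>i. Max (c ! i)) p n x"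
  have "\<And>a b. sd_rel X p a b \<Longrightarrow> ?F a = ?F b"
  proof -
    fix a b assume "sd_rel X p a b"
    then obtain m n y x c \<theta> where h: "a = (m, y, c)" "b = (n, x, map (\<lambda>S. \<theta> ` S) c)"
      "mono_map m n \<theta>" "x \<in> simp X n" "y = act X \<theta> m n x" "c \<in> sdD m p"
      unfolding sd_rel_def by blast
    have "?F a = act X (\<theta> \<circ> (\<lambda>i. Max (c ! i))) p n x"
      using h is_ssetD3[OF assms h(3) mono_Max[OF h(6)] h(4)] by simp
    also have "\<dots> = act X (\<lambda>i. Max (map (\<lambda>S. \<theta> ` S) c ! i)) p n x"
    proof (rule is_ssetD4[OF assms], intro allI impI)
      fix i assume i: "i \<le> p"
      have l: "length c = Suc p" using h(6) unfolding sdD_def by simp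
      have "c ! i \<subseteq> {..m}" "c ! i \<noteq> {}" "finite (c ! i)" using sdD_fin[OF h(6) i] by auto
      then show "(\<theta> \<circ> (\<lambda>i. Max (c ! i))) i = Max (map (\<lambda>S. \<theta> ` S) c ! i)"
        using Max_push[OF h(3)] i l by simp
    qed
    finally show "?F a = ?F b" using h by simp
  qed
  from cls_case3[of X p "\<lambda>n x c. act X (\<lambda>i. Max (c ! i)) p n x", OF this] show ?thesis
    unfolding lastv_def by simp
qed

lemma restr_push: "length d = Suc p \<Longrightarrow> mono_map m p \<psi> \<Longrightarrow>
   map (\<lambda>i. map ((`) \<theta>) d ! \<psi> i) [0..<Suc m] = map ((`) \<theta>) (map (\<lambda>i. d ! \<psi> i) [0..<Suc m])"
  unfolding mono_map_def by (auto simp: less_Suc_eq_le)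

lemma act_sd_cls:
  assumes "mono_map m p \<psi>"
  shows "act (sd X) \<psi> m p (cls X p (n, x, c)) = cls X m (n, x, map (\<lambda>i. c ! \<psi> i) [0..<Suc m])"
proof -
  let ?F = "\<lambda>(n, x, c). cls X m (n, x, map (\<lambda>i. c ! \<psi> i) [0..<Suc m])"
  have "\<And>a b. sd_rel X p a b \<Longrightarrow> ?F a = ?F b"
  proof -
    fix a b assume "sd_rel X p a b"
    then obtain m0 n y x d \<theta> where h: "a = (m0, y, d)" "b = (n, x, map (\<lambda>S. \<theta> ` S) d)"
      "mono_map m0 n \<theta>" "x \<in> simp X n" "y = act X \<theta> m0 n x" "d \<in> sdD m0 p"
      unfolding sd_rel_def by blast
    have l: "length d = Suc p" using h(6) unfolding sdD_def by simp
    have "sd_rel X m (m0, y, map (\<lambda>i. d ! \<psi> i) [0..<Suc m])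
        (n, x, map ((`) \<theta>) (map (\<lambda>i. d ! \<psi> i) [0..<Suc m]))"
      unfolding sd_rel_def using h sdD_restr[OF assms h(6)] by blast
    then have "cls X m (m0, y, map (\<lambda>i. d ! \<psi> i) [0..<Suc m]) = cls X m (n, x, map (\<lambda>i. map (\<lambda>S. \<theta> ` S) d ! \<psi> i) [0..<Suc m])"
      using rel_cls restr_push[OF l assms, of \<theta>] by metis
    then show "?F a = ?F b" using h by simp
  qed
  from cls_case3[of X p "\<lambda>n x c. cls X m (n, x, map (\<lambda>i. c ! \<psi> i) [0..<Suc m])", OF this] show ?thesis
    unfolding sd_def by simp
qed

declare upt_Suc[simp del]
lemma cls_in_sd: "x \<in> simp X n \<Longrightarrow> c \<in> sdD n p \<Longrightarrow> cls X p (n, x, c) \<in> simp (sd X) p"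
  unfolding sd_def by auto

lemma is_sset_sd: assumes X: "is_sset X" shows "is_sset (sd X)"
  unfolding is_sset_def
proof (intro conjI allI impI)
  fix p q \<phi> s assume a: "mono_map p q \<phi>" "s \<in> simp (sd X) q"
  obtain n x c where h: "s = Sd n x c" "x \<in> simp X n" "c \<in> sdD n q" "cls X q (n, x, c) = s"
    using sd_simpE[OF X a(2)] by blast
  show "act (sd X) \<phi> p q s \<in> simp (sd X) p"
    using act_sd_cls[OF a(1), of X n x c] h cls_in_sd[OF h(2) sdD_restr[OF a(1) h(3)]] by simp
next
  fix q s assume a: "s \<in> simp (sd X) q"
  obtain n x c where h: "s = Sd n x c" "x \<in> simp X n" "c \<in> sdD n q" "cls X q (n, x, c) = s"
    using sd_simpE[OF X a] by blast
  have m: "mono_map q q id" unfolding mono_map_def by simp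
  have l: "length c = Suc q" using h(3) unfolding sdD_def by simp
  have "map (\<lambda>i. c ! id i) [0..<Suc q] = c" using l map_nth[of c] by simp
  then show "act (sd X) id q q s = s" using act_sd_cls[OF m, of X n x c] h by simp
next
  fix m p q \<phi> \<psi> s assume a: "mono_map p q \<phi>" "mono_map m p \<psi>" "s \<in> simp (sd X) q"
  obtain n x c where h: "s = Sd n x c" "x \<in> simp X n" "c \<in> sdD n q" "cls X q (n, x, c) = s"
    using sd_simpE[OF X a(3)] by blast
  have mc: "mono_map m q (\<phi> \<circ> \<psi>)" using a(1,2) unfolding mono_map_def by auto
  have l: "map (\<lambda>i. map (\<lambda>i. c ! \<phi> i) [0..<Suc p] ! \<psi> i) [0..<Suc m] = map (\<lambda>i. c ! (\<phi> \<circ> \<psi>) i) [0..<Suc m]"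
    using a(2) unfolding mono_map_def by (auto simp: less_Suc_eq_le)
  show "act (sd X) \<psi> m p (act (sd X) \<phi> p q s) = act (sd X) (\<phi> \<circ> \<psi>) m q s"
  proof -
    have "act (sd X) \<psi> m p (act (sd X) \<phi> p q s) = act (sd X) \<psi> m p (cls X p (n, x, map (\<lambda>i. c ! \<phi> i) [0..<Suc p]))"
      using act_sd_cls[OF a(1), of X n x c] h by simp
    also have "\<dots> = cls X m (n, x, map (\<lambda>i. map (\<lambda>i. c ! \<phi> i) [0..<Suc p] ! \<psi> i) [0..<Suc m])"
      by (rule act_sd_cls[OF a(2)])
    also have "\<dots> = act (sd X) (\<phi> \<circ> \<psi>) m q s"
      unfolding l using act_sd_cls[OF mc, of X n x c] h by simp
    finally show ?thesis .
  qed
next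
  fix p q :: nat and \<phi> \<phi>' :: "nat \<Rightarrow> nat" and s assume a: "\<forall>i\<le>p. \<phi> i = \<phi>' i"
  show "act (sd X) \<phi> p q s = act (sd X) \<phi>' p q s"
  proof (cases s)
    case (Sd n x c)
    have e: "map (\<lambda>i. c ! \<phi> i) [0..<Suc p] = map (\<lambda>i. c ! \<phi>' i) [0..<Suc p]"
      using a by (simp add: less_Suc_eq_le)
    show ?thesis by (simp only: Sd sd_def sset.select_convs ssimp.case e)
  qed (simp add: sd_def)
qed

declare upt_Suc[simp del]
lemma smap_sd_map: assumes X: "is_sset X" and f: "smap X Y f"
  shows "smap (sd X) (sd Y) (sd_map Y f)"
  unfolding smap_def
proof (intro conjI allI impI)
  fix n s assume a: "s \<in> simp (sd X) n"
  obtain m x c where h: "s = Sd m x c" "x \<in> simp X m" "c \<in> sdD m n" "cls X n (m, x, c) = s"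
    using sd_simpE[OF X a] by blast
  show "sd_map Y f n s \<in> simp (sd Y) n"
    using sd_map_cls[OF f, of n m x c] h cls_in_sd[OF smapD1[OF f h(2)] h(3)] by simp
next
  fix p q \<phi> s assume a: "mono_map p q \<phi>" "s \<in> simp (sd X) q"
  obtain n x c where h: "s = Sd n x c" "x \<in> simp X n" "c \<in> sdD n q" "cls X q (n, x, c) = s"
    using sd_simpE[OF X a(2)] by blast
  show "sd_map Y f p (act (sd X) \<phi> p q s) = act (sd Y) \<phi> p q (sd_map Y f q s)"
  proof -
    have "sd_map Y f p (act (sd X) \<phi> p q s) = sd_map Y f p (cls X p (n, x, map (\<lambda>i. c ! \<phi> i) [0..<Suc p]))"
      using act_sd_cls[OF a(1), of X n x c] h by simp
    also have "\<dots> = cls Y p (n, f n x, map (\<lambda>i. c ! \<phi> i) [0..<Suc p])" by (rule sd_map_cls[OF f])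
    also have "\<dots> = act (sd Y) \<phi> p q (cls Y q (n, f n x, c))" by (rule act_sd_cls[OF a(1), symmetric])
    also have "\<dots> = act (sd Y) \<phi> p q (sd_map Y f q s)" using sd_map_cls[OF f, of q n x c] h by simp
    finally show ?thesis .
  qed
qed

lemma smap_lastv: assumes X: "is_sset X" shows "smap (sd X) X (lastv X)"
  unfolding smap_def
proof (intro conjI allI impI)
  fix n s assume a: "s \<in> simp (sd X) n"
  obtain m x c where h: "s = Sd m x c" "x \<in> simp X m" "c \<in> sdD m n" "cls X n (m, x, c) = s"
    using sd_simpE[OF X a] by blast
  show "lastv X n s \<in> simp X n"
    using lastv_cls[OF X, of n m x c] h is_ssetD1[OF X mono_Max[OF h(3)] h(2)] by simp
next
  fix p q \<phi> s assume a: "mono_map p q \<phi>" "s \<in> simp (sd X) q"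
  obtain n x c where h: "s = Sd n x c" "x \<in> simp X n" "c \<in> sdD n q" "cls X q (n, x, c) = s"
    using sd_simpE[OF X a(2)] by blast
  have "act X \<phi> p q (lastv X q s) = act X ((\<lambda>i. Max (c ! i)) \<circ> \<phi>) p n x"
    using lastv_cls[OF X, of q n x c] h is_ssetD3[OF X mono_Max[OF h(3)] a(1) h(2)] by simp
  also have "\<dots> = act X (\<lambda>i. Max (map (\<lambda>i. c ! \<phi> i) [0..<Suc p] ! i)) p n x"
    by (rule is_ssetD4[OF X]) (auto simp: less_Suc_eq_le)
  finally show "lastv X p (act (sd X) \<phi> p q s) = act X \<phi> p q (lastv X q s)"
    using act_sd_cls[OF a(1), of X n x c] lastv_cls[OF X] h by simp
qed

lemma lastv_nat:
  assumes X: "is_sset X" and Y: "is_sset Y" and h: "smap X Y g" and s: "s \<in> simp (sd X) p"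
  shows "lastv Y p (sd_map Y g p s) = g p (lastv X p s)"
proof -
  obtain n x c where e: "s = Sd n x c" "x \<in> simp X n" "c \<in> sdD n p" "cls X p (n, x, c) = s"
    using sd_simpE[OF X s] by blast
  show ?thesis
    using sd_map_cls[OF h, of p n x c] lastv_cls[OF Y] lastv_cls[OF X, of p n x c] e
      smapD2[OF h mono_Max[OF e(3)] e(2)] by simp
qed

lemma sd_map_comp:
  assumes X: "is_sset X" and f: "smap X Y f" and g: "smap Y Z g" and k: "smap X Z k"
    and eq: "\<And>n x. x \<in> simp X n \<Longrightarrow> k n x = g n (f n x)" and s: "s \<in> simp (sd X) p"
  shows "sd_map Z g p (sd_map Y f p s) = sd_map Z k p s"
proof -
  obtain n x c where e: "s = Sd n x c" "x \<in> simp X n" "c \<in> sdD n p" "cls X p (n, x, c) = s"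
    using sd_simpE[OF X s] by blast
  show ?thesis
  proof -
    have "sd_map Z g p (sd_map Y f p s) = sd_map Z g p (cls Y p (n, f n x, c))"
      using sd_map_cls[OF f, of p n x c] e by simp
    also have "\<dots> = cls Z p (n, g n (f n x), c)" by (rule sd_map_cls[OF g])
    also have "\<dots> = sd_map Z k p s" using sd_map_cls[OF k, of p n x c] e eq[OF e(2)] by simp
    finally show ?thesis .
  qed
qed

lemma sdn_0[simp]: "sdn 0 X = X" by (simp add: sdn_def)
lemma sdn_Suc[simp]: "sdn (Suc k) X = sd (sdn k X)" by (simp add: sdn_def)
lemma sdn_add: "sdn r (sdn s X) = sdn (r + s) X"
  by (simp add: sdn_def funpow_add)

lemma is_sset_sdn: "is_sset X \<Longrightarrow> is_sset (sdn k X)"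
  by (induction k) (simp_all add: is_sset_sd)

lemma smap_sdmapn: "is_sset X \<Longrightarrow> smap X Y f \<Longrightarrow> smap (sdn k X) (sdn k Y) (sdmapn k Y f)"
  by (induction k) (simp_all add: smap_sd_map is_sset_sdn)

lemma sdmapn_comp:
  assumes X: "is_sset X" and Y: "is_sset Y" and f: "smap X Y f" and g: "smap Y Z g" and h: "smap X Z h"
    and eq: "\<And>n x. x \<in> simp X n \<Longrightarrow> h n x = g n (f n x)"
  shows "s \<in> simp (sdn k X) p \<Longrightarrow> sdmapn k Z g p (sdmapn k Y f p s) = sdmapn k Z h p s"
proof (induction k arbitrary: p s)
  case 0 then show ?case using eq by simp
next
  case (Suc k)
  have s: "s \<in> simp (sd (sdn k X)) p" using Suc.prems by simp
  show ?case
    using sd_map_comp[OF is_sset_sdn[OF X, of k] smap_sdmapn[OF X f] smap_sdmapn[OF Y g] smap_sdmapn[OF X h] Suc.IH[symmetric] s]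
    by simp
qed

lemma sdmapn_add: "sdmapn (a + b) Y g = sdmapn b (sdn a Y) (sdmapn a Y g)"
  by (induction b) (simp_all add: sdn_add add.commute)

lemma smap_gam: "is_sset X \<Longrightarrow> smap (sdn k X) X (gam k X)"
proof (induction k)
  case 0 then show ?case unfolding smap_def by simp
next
  case (Suc k)
  have "smap (sd (sdn k X)) X (\<lambda>p s. gam k X p (lastv (sdn k X) p s))"
    by (rule smap_comp[OF smap_lastv[OF is_sset_sdn[OF Suc.prems]] Suc.IH[OF Suc.prems]])
  then show ?case by simp
qed

lemma gam_nat:
  assumes X: "is_sset X" and Y: "is_sset Y" and h: "smap X Y h"
  shows "s \<in> simp (sdn k X) p \<Longrightarrow> gam k Y p (sdmapn k Y h p s) = h p (gam k X p s)"
proof (induction k arbitrary: p s)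
  case 0 then show ?case by simp
next
  case (Suc k)
  have "lastv (sdn k Y) p (sd_map (sdn k Y) (sdmapn k Y h) p s) = sdmapn k Y h p (lastv (sdn k X) p s)"
    using lastv_nat[OF is_sset_sdn[OF X] is_sset_sdn[OF Y] smap_sdmapn[OF X h]] Suc.prems by simp
  moreover have "lastv (sdn k X) p s \<in> simp (sdn k X) p"
    using smapD1[OF smap_lastv[OF is_sset_sdn[OF X]]] Suc.prems by simp
  ultimately show ?case using Suc.IH by simp
qed

lemma is_sset_lift: "is_sset X \<Longrightarrow> is_sset (lift X)"
  unfolding is_sset_def lift_def by auto

lemma smap_liftmap: "smap X Y f \<Longrightarrow> smap (lift X) (lift Y) (liftmap f)"
  unfolding smap_def lift_def liftmap_def by auto

lemma is_sset_subs: "is_sset X \<Longrightarrow> subsset L X \<Longrightarrow> is_sset (subs X L)"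
  unfolding is_sset_def subsset_def subs_def by (simp; meson subsetD)

lemma smap_lift_incl: "subsset L X \<Longrightarrow> smap (lift (subs X L)) (lift X) (\<lambda>n x. x)"
  unfolding smap_def subsset_def subs_def lift_def by auto

lemma is_sset_sprod: "is_sset K \<Longrightarrow> is_sset K' \<Longrightarrow> is_sset (sprod K K')"
  unfolding is_sset_def sprod_def by auto

lemma smap_fst: "smap (sprod K K') K (\<lambda>n. fst)"
  unfolding smap_def sprod_def by auto

lemma smap_snd: "smap (sprod K K') K' (\<lambda>n. snd)"
  unfolding smap_def sprod_def by auto

lemma smap_prod_map: "smap K1 K f \<Longrightarrow> smap K1' K' f' \<Longrightarrow> smap (sprod K1 K1') (sprod K K') (prod_map f f')"
  unfolding smap_def sprod_def prod_map_def by auto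

lemma subsset_A: "is_sset K \<Longrightarrow> subsset L' K' \<Longrightarrow> subsset (\<lambda>n. simp K n \<times> L' n) (sprod K K')"
  unfolding subsset_def sprod_def by (auto intro: is_ssetD1)

lemma subsset_B: "is_sset K' \<Longrightarrow> subsset L K \<Longrightarrow> subsset (\<lambda>n. L n \<times> simp K' n) (sprod K K')"
  unfolding subsset_def sprod_def by (auto intro: is_ssetD1)

lemma subsset_PU: "is_sset K \<Longrightarrow> is_sset K' \<Longrightarrow> subsset L K \<Longrightarrow> subsset L' K' \<Longrightarrow>
    subsset (pair_union K L K' L') (sprod K K')"
  unfolding subsset_def sprod_def pair_union_def by (auto intro: is_ssetD1)

lemma smap_snd_sub: "smap (lift (subs (sprod K K') (\<lambda>n. simp K n \<times> L' n))) (lift (subs K' L')) (liftmap (\<lambda>n. snd))"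
  unfolding smap_def lift_def liftmap_def subs_def sprod_def by auto

lemma smap_fst_sub: "smap (lift (subs (sprod K K') (\<lambda>n. L n \<times> simp K' n))) (lift (subs K L)) (liftmap (\<lambda>n. fst))"
  unfolding smap_def lift_def liftmap_def subs_def sprod_def by auto

lemma union_sd:
  assumes X: "is_sset X" and S: "subsset S X" and A: "subsset A X" and B: "subsset B X"
    and U: "\<And>n. S n \<subseteq> A n \<union> B n"
  shows "y \<in> simp (sdn k (lift (subs X S))) p \<Longrightarrow>
    (\<exists>z \<in> simp (sdn k (lift (subs X A))) p. sdmapn k (lift X) (\<lambda>n x. x) p y = sdmapn k (lift X) (\<lambda>n x. x) p z) \<or>
    (\<exists>z \<in> simp (sdn k (lift (subs X B))) p. sdmapn k (lift X) (\<lambda>n x. x) p y = sdmapn k (lift X) (\<lambda>n x. x) p z)"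
proof (induction k arbitrary: p y)
  case 0
  then obtain x where x: "y = Base x" "x \<in> S p" by (auto simp: lift_def subs_def)
  then have "x \<in> A p \<or> x \<in> B p" using U by blast
  then show ?case using x by (auto simp: lift_def subs_def)
next
  case (Suc k)
  have XS: "is_sset (sdn k (lift (subs X S)))" by (rule is_sset_sdn[OF is_sset_lift[OF is_sset_subs[OF X S]]])
  obtain n x c where h: "y = Sd n x c" "x \<in> simp (sdn k (lift (subs X S))) n" "c \<in> sdD n p"
      "cls (sdn k (lift (subs X S))) p (n, x, c) = y"
    using sd_simpE[OF XS] Suc.prems by (metis sdn_Suc)
  have iS: "smap (sdn k (lift (subs X S))) (sdn k (lift X)) (sdmapn k (lift X) (\<lambda>n x. x))"
    by (rule smap_sdmapn[OF is_sset_lift[OF is_sset_subs[OF X S]] smap_lift_incl[OF S]])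
  have iA: "smap (sdn k (lift (subs X A))) (sdn k (lift X)) (sdmapn k (lift X) (\<lambda>n x. x))"
    by (rule smap_sdmapn[OF is_sset_lift[OF is_sset_subs[OF X A]] smap_lift_incl[OF A]])
  have iB: "smap (sdn k (lift (subs X B))) (sdn k (lift X)) (sdmapn k (lift X) (\<lambda>n x. x))"
    by (rule smap_sdmapn[OF is_sset_lift[OF is_sset_subs[OF X B]] smap_lift_incl[OF B]])
  have ey: "sdmapn (Suc k) (lift X) (\<lambda>n x. x) p y = cls (sdn k (lift X)) p (n, sdmapn k (lift X) (\<lambda>n x. x) n x, c)"
    using sd_map_cls[OF iS, of p n x c] h(4) by simp
  from Suc.IH[OF h(2)] show ?case
  proof
    assume "\<exists>z\<in>simp (sdn k (lift (subs X A))) n. sdmapn k (lift X) (\<lambda>n x. x) n x = sdmapn k (lift X) (\<lambda>n x. x) n z"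
    then obtain z where z: "z \<in> simp (sdn k (lift (subs X A))) n" "sdmapn k (lift X) (\<lambda>n x. x) n x = sdmapn k (lift X) (\<lambda>n x. x) n z" by blast
    have "sdmapn (Suc k) (lift X) (\<lambda>n x. x) p (cls (sdn k (lift (subs X A))) p (n, z, c)) = cls (sdn k (lift X)) p (n, sdmapn k (lift X) (\<lambda>n x. x) n z, c)"
      using sd_map_cls[OF iA, of p n z c] by simp
    moreover have "cls (sdn k (lift (subs X A))) p (n, z, c) \<in> simp (sdn (Suc k) (lift (subs X A))) p"
      using cls_in_sd[OF z(1) h(3)] by simp
    ultimately show ?case using ey z(2) by metis
  next
    assume "\<exists>z\<in>simp (sdn k (lift (subs X B))) n. sdmapn k (lift X) (\<lambda>n x. x) n x = sdmapn k (lift X) (\<lambda>n x. x) n z"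
    then obtain z where z: "z \<in> simp (sdn k (lift (subs X B))) n" "sdmapn k (lift X) (\<lambda>n x. x) n x = sdmapn k (lift X) (\<lambda>n x. x) n z" by blast
    have "sdmapn (Suc k) (lift X) (\<lambda>n x. x) p (cls (sdn k (lift (subs X B))) p (n, z, c)) = cls (sdn k (lift X)) p (n, sdmapn k (lift X) (\<lambda>n x. x) n z, c)"
      using sd_map_cls[OF iB, of p n z c] by simp
    moreover have "cls (sdn k (lift (subs X B))) p (n, z, c) \<in> simp (sdn (Suc k) (lift (subs X B))) p"
      using cls_in_sd[OF z(1) h(3)] by simp
    ultimately show ?case using ey z(2) by metis
  qed
qed

lemma push_hyper:
  assumes m: "mono_map p q \<phi>" and u: "u \<in> hyper p"
  shows "push \<phi> p u \<in> hyper q"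
proof -
  have "\<forall>i>q. push \<phi> p u i = 0"
  proof (intro allI impI)
    fix i assume "q < i"
    then have e: "{j. j \<le> p \<and> \<phi> j = i} = {}" using m unfolding mono_map_def by force
    show "push \<phi> p u i = 0" unfolding push_def e by simp
  qed
  moreover have "(\<Sum>i\<le>q. push \<phi> p u i) = 1"
  proof -
    have "\<phi> ` {..p} \<subseteq> {..q}" using m unfolding mono_map_def by auto
    from sum.group[OF finite_atMost finite_atMost this, of u]
    have "(\<Sum>i\<le>q. \<Sum>j\<in>{x. x \<in> {..p} \<and> \<phi> x = i}. u j) = (\<Sum>j\<le>p. u j)" .
    then show ?thesis using u unfolding push_def hyper_def by simp
  qed
  ultimately show ?thesis unfolding hyper_def by simp
qed

lemma zfun_pullback:
  assumes X: "is_sset X" and f: "smap X Y f" and g: "g \<in> zfun Y"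
  shows "pullback X f g \<in> zfun X"
proof -
  have gs: "smap Y ZDelta g" using g unfolding zfun_def by simp
  have "smap X ZDelta (pullback X f g)"
    unfolding smap_def pullback_def
    using smapD1[OF gs smapD1[OF f]] smapD2[OF gs _ smapD1[OF f]] smapD2[OF f] is_ssetD1[OF X] by simp
  then show ?thesis unfolding zfun_def pullback_def by simp
qed

lemma ZD_mult: "F \<in> ZD n \<Longrightarrow> G \<in> ZD n \<Longrightarrow> restrict (\<lambda>t. F t * G t) (hyper n) \<in> ZD n"
proof -
  assume "F \<in> ZD n" "G \<in> ZD n"
  then obtain F0 G0 where h: "F = restrict F0 (hyper n)" "F0 \<in> polyfun (Suc n)" "G = restrict G0 (hyper n)" "G0 \<in> polyfun (Suc n)"
    unfolding ZD_def by blast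
  have "restrict (\<lambda>t. F t * G t) (hyper n) = restrict (\<lambda>t. F0 t * G0 t) (hyper n)"
    using h by (auto simp: restrict_def)
  moreover have "(\<lambda>t. F0 t * G0 t) \<in> polyfun (Suc n)" using h by (simp add: polyfun.pf_mult)
  ultimately show ?thesis unfolding ZD_def by blast
qed

lemma zfun_zmul:
  assumes X: "is_sset X" and g: "g \<in> zfun X" and h: "h \<in> zfun X"
  shows "zmul X g h \<in> zfun X"
proof -
  have gs: "smap X ZDelta g" and hs: "smap X ZDelta h" using g h unfolding zfun_def by auto
  have "smap X ZDelta (zmul X g h)"
    unfolding smap_def
  proof (intro conjI allI impI)
    fix n x assume "x \<in> simp X n"
    then show "zmul X g h n x \<in> simp ZDelta n"
      using smapD1[OF gs] smapD1[OF hs] ZD_mult unfolding zmul_def ZDelta_def by simp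
  next
    fix p q \<phi> x assume a: "mono_map p q \<phi>" "x \<in> simp X q"
    show "zmul X g h p (act X \<phi> p q x) = act ZDelta \<phi> p q (zmul X g h q x)"
      using smapD2[OF gs a] smapD2[OF hs a] is_ssetD1[OF X a] a push_hyper[OF a(1)]
      unfolding zmul_def ZDelta_def by (auto simp: restrict_def)
  qed
  then show ?thesis unfolding zfun_def zmul_def by simp
qed

lemma zrel_zero:
  assumes "a \<in> zrel r K L" "v \<in> simp (sdn r (lift (subs K L))) p"
  shows "a p (sdmapn r (lift K) (\<lambda>n x. x) p v) = restrict (\<lambda>t. 0) (hyper p)"
proof -
  have "pullback (sdn r (lift (subs K L))) (sdmapn r (lift K) (\<lambda>n x. x)) a p v = zzero (sdn r (lift (subs K L))) p v"
    using assms(1) unfolding zrel_def by simp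
  then show ?thesis using assms(2) unfolding pullback_def zzero_def by simp
qed

lemma vanish:
  assumes X: "is_sset X" and T: "is_sset T" and A: "subsset A X" and LT: "subsset LT T"
    and \<pi>: "smap X T \<pi>" and \<pi>A: "smap (lift (subs X A)) (lift (subs T LT)) (liftmap \<pi>)"
    and b: "b \<in> zrel s T LT" and N: "N = r + s"
    and z: "z \<in> simp (sdn N (lift (subs X A))) n"
  shows "pullback (sdn N (lift X)) (sdmapn N (lift T) (liftmap \<pi>))
           (pullback (sdn r (sdn s (lift T))) (gam r (sdn s (lift T))) b) n
           (sdmapn N (lift X) (\<lambda>n x. x) n z) = restrict (\<lambda>t. 0) (hyper n)"
proof -
  have lX: "is_sset (lift X)" by (rule is_sset_lift[OF X])
  have lT: "is_sset (lift T)" by (rule is_sset_lift[OF T])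
  have XA: "is_sset (lift (subs X A))" by (rule is_sset_lift[OF is_sset_subs[OF X A]])
  have TL: "is_sset (lift (subs T LT))" by (rule is_sset_lift[OF is_sset_subs[OF T LT]])
  have iA: "smap (lift (subs X A)) (lift X) (\<lambda>n x. x)" by (rule smap_lift_incl[OF A])
  have iT: "smap (lift (subs T LT)) (lift T) (\<lambda>n x. x)" by (rule smap_lift_incl[OF LT])
  have lpi: "smap (lift X) (lift T) (liftmap \<pi>)" by (rule smap_liftmap[OF \<pi>])
  have lpiA: "smap (lift (subs X A)) (lift T) (liftmap \<pi>)" using smap_comp[OF \<pi>A iT] by simp
  define w where "w = sdmapn N (lift X) (\<lambda>n x. x) n z"
  define w2 where "w2 = sdmapn N (lift (subs T LT)) (liftmap \<pi>) n z"
  have w: "w \<in> simp (sdn N (lift X)) n" unfolding w_def by (rule smapD1[OF smap_sdmapn[OF XA iA] z])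
  have w2: "w2 \<in> simp (sdn N (lift (subs T LT))) n" unfolding w2_def by (rule smapD1[OF smap_sdmapn[OF XA \<pi>A] z])
  have pw: "sdmapn N (lift T) (liftmap \<pi>) n w = sdmapn N (lift T) (\<lambda>n x. x) n w2"
  proof -
    have "sdmapn N (lift T) (liftmap \<pi>) n w = sdmapn N (lift T) (liftmap \<pi>) n z"
      unfolding w_def by (rule sdmapn_comp[OF XA lX iA lpi lpiA _ z]) simp
    also have "\<dots> = sdmapn N (lift T) (\<lambda>n x. x) n w2"
      unfolding w2_def by (rule sdmapn_comp[OF XA TL \<pi>A iT lpiA _ z, symmetric]) simp
    finally show ?thesis .
  qed
  have pwin: "sdmapn N (lift T) (liftmap \<pi>) n w \<in> simp (sdn r (sdn s (lift T))) n"
    using smapD1[OF smap_sdmapn[OF lX lpi] w] N by (simp add: sdn_add)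
  have w2': "w2 \<in> simp (sdn r (sdn s (lift (subs T LT)))) n" using w2 N by (simp add: sdn_add)
  have e1: "sdmapn N (lift T) (\<lambda>n x. x) = sdmapn r (sdn s (lift T)) (sdmapn s (lift T) (\<lambda>n x. x))"
    using sdmapn_add[of s r "lift T" "\<lambda>n x. x"] N by (simp add: add.commute)
  have g: "gam r (sdn s (lift T)) n (sdmapn r (sdn s (lift T)) (sdmapn s (lift T) (\<lambda>n x. x)) n w2)
       = sdmapn s (lift T) (\<lambda>n x. x) n (gam r (sdn s (lift (subs T LT))) n w2)"
    by (rule gam_nat[OF is_sset_sdn[OF TL] is_sset_sdn[OF lT] smap_sdmapn[OF TL iT] w2'])
  have v: "gam r (sdn s (lift (subs T LT))) n w2 \<in> simp (sdn s (lift (subs T LT))) n"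
    by (rule smapD1[OF smap_gam[OF is_sset_sdn[OF TL]] w2'])
  show ?thesis
    unfolding w_def[symmetric] using w pwin pw e1 g zrel_zero[OF b v]
    by (simp add: pullback_def)
qed

lemma side:
  assumes K: "is_sset K" "is_sset K'" and K1: "is_sset K1" "is_sset K1'" and T: "is_sset T" "is_sset T1"
    and f: "smap K1 K f" and f': "smap K1' K' f'" and g: "smap T1 T g"
    and \<pi>: "smap (sprod K K') T \<pi>" and \<pi>1: "smap (sprod K1 K1') T1 \<pi>1"
    and com: "\<And>n z. g n (\<pi>1 n z) = \<pi> n (prod_map f f' n z)"
    and N: "N = r + s"
    and x: "x \<in> simp (sdn N (lift (sprod K1 K1'))) n"
  shows "pullback (sdn N (lift (sprod K1 K1'))) (sdmapn N (lift T1) (liftmap \<pi>1))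
           (pullback (sdn s (sdn r (lift T1))) (gam s (sdn r (lift T1)))
              (pullback (sdn r (lift T1)) (sdmapn r (lift T) (liftmap g)) a)) n x
       = pullback (sdn N (lift (sprod K K'))) (sdmapn N (lift T) (liftmap \<pi>))
           (pullback (sdn s (sdn r (lift T))) (gam s (sdn r (lift T))) a) n
           (sdmapn N (lift (sprod K K')) (liftmap (prod_map f f')) n x)"
proof -
  have lP: "is_sset (lift (sprod K K'))" by (rule is_sset_lift[OF is_sset_sprod[OF K]])
  have lP1: "is_sset (lift (sprod K1 K1'))" by (rule is_sset_lift[OF is_sset_sprod[OF K1]])
  have lT: "is_sset (lift T)" by (rule is_sset_lift[OF T(1)])
  have lT1: "is_sset (lift T1)" by (rule is_sset_lift[OF T(2)])
  have F: "smap (lift (sprod K1 K1')) (lift (sprod K K')) (liftmap (prod_map f f'))"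
    by (rule smap_liftmap[OF smap_prod_map[OF f f']])
  have p: "smap (lift (sprod K K')) (lift T) (liftmap \<pi>)" by (rule smap_liftmap[OF \<pi>])
  have p1: "smap (lift (sprod K1 K1')) (lift T1) (liftmap \<pi>1)" by (rule smap_liftmap[OF \<pi>1])
  have lg: "smap (lift T1) (lift T) (liftmap g)" by (rule smap_liftmap[OF g])
  have hh: "smap (lift (sprod K1 K1')) (lift T) (liftmap (\<lambda>n z. g n (\<pi>1 n z)))"
    by (rule smap_liftmap[OF smap_comp[OF \<pi>1 g]])
  define y where "y = sdmapn N (lift T1) (liftmap \<pi>1) n x"
  have y: "y \<in> simp (sdn N (lift T1)) n" unfolding y_def by (rule smapD1[OF smap_sdmapn[OF lP1 p1] x])
  have y': "y \<in> simp (sdn s (sdn r (lift T1))) n" using y N by (simp add: sdn_add add.commute)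
  have gy: "gam s (sdn r (lift T1)) n y \<in> simp (sdn r (lift T1)) n"
    by (rule smapD1[OF smap_gam[OF is_sset_sdn[OF lT1]] y'])
  have Fx: "sdmapn N (lift (sprod K K')) (liftmap (prod_map f f')) n x \<in> simp (sdn N (lift (sprod K K'))) n"
    by (rule smapD1[OF smap_sdmapn[OF lP1 F] x])
  have py: "sdmapn N (lift T) (liftmap \<pi>) n (sdmapn N (lift (sprod K K')) (liftmap (prod_map f f')) n x)
         \<in> simp (sdn s (sdn r (lift T))) n"
    using smapD1[OF smap_sdmapn[OF lP p] Fx] N by (simp add: sdn_add add.commute)
  have e1: "sdmapn r (lift T) (liftmap g) n (gam s (sdn r (lift T1)) n y)
      = gam s (sdn r (lift T)) n (sdmapn s (sdn r (lift T)) (sdmapn r (lift T) (liftmap g)) n y)"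
    by (rule gam_nat[OF is_sset_sdn[OF lT1] is_sset_sdn[OF lT] smap_sdmapn[OF lT1 lg] y', symmetric])
  have e2: "sdmapn s (sdn r (lift T)) (sdmapn r (lift T) (liftmap g)) = sdmapn N (lift T) (liftmap g)"
    using sdmapn_add[of r s "lift T" "liftmap g"] N by simp
  have e3: "sdmapn N (lift T) (liftmap g) n y
      = sdmapn N (lift T) (liftmap \<pi>) n (sdmapn N (lift (sprod K K')) (liftmap (prod_map f f')) n x)"
  proof -
    have "sdmapn N (lift T) (liftmap g) n y = sdmapn N (lift T) (liftmap (\<lambda>n z. g n (\<pi>1 n z))) n x"
      unfolding y_def by (rule sdmapn_comp[OF lP1 lT1 p1 lg hh _ x]) (simp add: liftmap_def)
    also have "\<dots> = sdmapn N (lift T) (liftmap \<pi>) n (sdmapn N (lift (sprod K K')) (liftmap (prod_map f f')) n x)"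
      by (rule sdmapn_comp[OF lP1 lP F p hh _ x, symmetric]) (simp add: liftmap_def com)
    finally show ?thesis .
  qed
  show ?thesis
    using x y' gy Fx py e1 e2 e3 by (simp add: pullback_def y_def)
qed

theorem lemma3p1:
  fixes K :: "'a sset" and L :: "nat \<Rightarrow> 'a set"
    and K' :: "'b sset" and L' :: "nat \<Rightarrow> 'b set"
    and r s :: nat
  assumes "finite_sset K" "subsset L K" "finite_sset K'" "subsset L' K'"
  shows "(\<forall>a \<in> zrel r K L. \<forall>b \<in> zrel s K' L'.
            mu r s K K' a b \<in> zrel (r + s) (sprod K K') (pair_union K L K' L'))
       \<and> (\<forall>(K1 :: 'c sset) (L1 :: nat \<Rightarrow> 'c set) (K1' :: 'd sset) (L1' :: nat \<Rightarrow> 'd set) f f'.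
            finite_sset K1 \<longrightarrow> subsset L1 K1 \<longrightarrow> finite_sset K1' \<longrightarrow> subsset L1' K1' \<longrightarrow>
            smap K1 K f \<longrightarrow> (\<forall>n. f n ` L1 n \<subseteq> L n) \<longrightarrow>
            smap K1' K' f' \<longrightarrow> (\<forall>n. f' n ` L1' n \<subseteq> L' n) \<longrightarrow>
            (\<forall>a \<in> zrel r K L. \<forall>b \<in> zrel s K' L'.
               mu r s K1 K1'
                  (pullback (sdn r (lift K1)) (sdmapn r (lift K) (liftmap f)) a)
                  (pullback (sdn s (lift K1')) (sdmapn s (lift K') (liftmap f')) b)
               = pullback (sdn (r + s) (lift (sprod K1 K1')))
                   (sdmapn (r + s) (lift (sprod K K')) (liftmap (prod_map f f')))
                   (mu r s K K' a b)))"
proof -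
  have K: "is_sset K" "is_sset K'" using assms(1,3) unfolding finite_sset_def by auto
  have L: "subsset L K" and L': "subsset L' K'" using assms(2,4) by auto
  have lK: "is_sset (lift K)" and lK': "is_sset (lift K')" using is_sset_lift K by auto
  have lP: "is_sset (lift (sprod K K'))" by (rule is_sset_lift[OF is_sset_sprod[OF K]])
  have P: "is_sset (sdn (r + s) (lift (sprod K K')))" by (rule is_sset_sdn[OF lP])
  have eK: "sdn s (sdn r (lift K)) = sdn (r + s) (lift K)" by (simp add: sdn_add add.commute)
  have eK': "sdn r (sdn s (lift K')) = sdn (r + s) (lift K')" by (simp add: sdn_add)
  have part1: "\<forall>a \<in> zrel r K L. \<forall>b \<in> zrel s K' L'.
            mu r s K K' a b \<in> zrel (r + s) (sprod K K') (pair_union K L K' L')"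
  proof (intro ballI)
    fix a b assume a: "a \<in> zrel r K L" and b: "b \<in> zrel s K' L'"
    have az: "a \<in> zfun (sdn r (lift K))" using a unfolding zrel_def by simp
    have bz: "b \<in> zfun (sdn s (lift K'))" using b unfolding zrel_def by simp
    have a1: "pullback (sdn s (sdn r (lift K))) (gam s (sdn r (lift K))) a \<in> zfun (sdn (r + s) (lift K))"
      using zfun_pullback[OF is_sset_sdn[OF is_sset_sdn[OF lK], of s] smap_gam[OF is_sset_sdn[OF lK], of s] az] eK by simp
    have b1: "pullback (sdn r (sdn s (lift K'))) (gam r (sdn s (lift K'))) b \<in> zfun (sdn (r + s) (lift K'))"
      using zfun_pullback[OF is_sset_sdn[OF is_sset_sdn[OF lK'], of r] smap_gam[OF is_sset_sdn[OF lK'], of r] bz] eK' by simp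
    have a2: "pullback (sdn (r + s) (lift (sprod K K'))) (sdmapn (r + s) (lift K) (liftmap (\<lambda>n. fst)))
        (pullback (sdn s (sdn r (lift K))) (gam s (sdn r (lift K))) a) \<in> zfun (sdn (r + s) (lift (sprod K K')))"
      by (rule zfun_pullback[OF P smap_sdmapn[OF lP smap_liftmap[OF smap_fst]] a1])
    have b2: "pullback (sdn (r + s) (lift (sprod K K'))) (sdmapn (r + s) (lift K') (liftmap (\<lambda>n. snd)))
        (pullback (sdn r (sdn s (lift K'))) (gam r (sdn s (lift K'))) b) \<in> zfun (sdn (r + s) (lift (sprod K K')))"
      by (rule zfun_pullback[OF P smap_sdmapn[OF lP smap_liftmap[OF smap_snd]] b1])
    have mz: "mu r s K K' a b \<in> zfun (sdn (r + s) (lift (sprod K K')))"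
      unfolding mu_def Let_def by (rule zfun_zmul[OF P a2 b2])
    have U: "\<And>n. pair_union K L K' L' n \<subseteq> (\<lambda>n. simp K n \<times> L' n) n \<union> (\<lambda>n. L n \<times> simp K' n) n"
      unfolding pair_union_def by auto
    have PU: "subsset (pair_union K L K' L') (sprod K K')" by (rule subsset_PU[OF K L L'])
    have SA: "subsset (\<lambda>n. simp K n \<times> L' n) (sprod K K')" by (rule subsset_A[OF K(1) L'])
    have SB: "subsset (\<lambda>n. L n \<times> simp K' n) (sprod K K')" by (rule subsset_B[OF K(2) L])
    have kern: "pullback (sdn (r + s) (lift (subs (sprod K K') (pair_union K L K' L'))))
        (sdmapn (r + s) (lift (sprod K K')) (\<lambda>n x. x)) (mu r s K K' a b)
      = zzero (sdn (r + s) (lift (subs (sprod K K') (pair_union K L K' L'))))"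
    proof (rule ext, rule ext)
      fix n y
      show "pullback (sdn (r + s) (lift (subs (sprod K K') (pair_union K L K' L'))))
        (sdmapn (r + s) (lift (sprod K K')) (\<lambda>n x. x)) (mu r s K K' a b) n y
      = zzero (sdn (r + s) (lift (subs (sprod K K') (pair_union K L K' L')))) n y"
      proof (cases "y \<in> simp (sdn (r + s) (lift (subs (sprod K K') (pair_union K L K' L')))) n")
        case False then show ?thesis unfolding pullback_def zzero_def by simp
      next
        case True
        have zero: "\<And>G. restrict (\<lambda>t. G t * restrict (\<lambda>t. 0) (hyper n) t) (hyper n) = restrict (\<lambda>t. (0::int)) (hyper n)"
          "\<And>G. restrict (\<lambda>t. restrict (\<lambda>t. 0) (hyper n) t * G t) (hyper n) = restrict (\<lambda>t. (0::int)) (hyper n)"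
          by (auto simp: restrict_def)
        have "mu r s K K' a b n (sdmapn (r + s) (lift (sprod K K')) (\<lambda>n x. x) n y) = restrict (\<lambda>t. 0) (hyper n)"
          using union_sd[OF is_sset_sprod[OF K] PU SA SB U True]
        proof
          assume "\<exists>z\<in>simp (sdn (r + s) (lift (subs (sprod K K') (\<lambda>n. simp K n \<times> L' n)))) n.
             sdmapn (r + s) (lift (sprod K K')) (\<lambda>n x. x) n y = sdmapn (r + s) (lift (sprod K K')) (\<lambda>n x. x) n z"
          then obtain z where z: "z \<in> simp (sdn (r + s) (lift (subs (sprod K K') (\<lambda>n. simp K n \<times> L' n)))) n"
            "sdmapn (r + s) (lift (sprod K K')) (\<lambda>n x. x) n y = sdmapn (r + s) (lift (sprod K K')) (\<lambda>n x. x) n z"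
            by blast
          have zin: "sdmapn (r + s) (lift (sprod K K')) (\<lambda>n x. x) n z \<in> simp (sdn (r + s) (lift (sprod K K'))) n"
            by (rule smapD1[OF smap_sdmapn[OF is_sset_lift[OF is_sset_subs[OF is_sset_sprod[OF K] SA]] smap_lift_incl[OF SA]] z(1)])
          have v: "pullback (sdn (r + s) (lift (sprod K K'))) (sdmapn (r + s) (lift K') (liftmap (\<lambda>n. snd)))
           (pullback (sdn r (sdn s (lift K'))) (gam r (sdn s (lift K'))) b) n
           (sdmapn (r + s) (lift (sprod K K')) (\<lambda>n x. x) n z) = restrict (\<lambda>t. 0) (hyper n)"
            by (rule vanish[OF is_sset_sprod[OF K] K(2) SA L' smap_snd smap_snd_sub b refl z(1)])
          show ?thesis unfolding z(2) mu_def Let_def zmul_def using zin v zero by simp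
        next
          assume "\<exists>z\<in>simp (sdn (r + s) (lift (subs (sprod K K') (\<lambda>n. L n \<times> simp K' n)))) n.
             sdmapn (r + s) (lift (sprod K K')) (\<lambda>n x. x) n y = sdmapn (r + s) (lift (sprod K K')) (\<lambda>n x. x) n z"
          then obtain z where z: "z \<in> simp (sdn (r + s) (lift (subs (sprod K K') (\<lambda>n. L n \<times> simp K' n)))) n"
            "sdmapn (r + s) (lift (sprod K K')) (\<lambda>n x. x) n y = sdmapn (r + s) (lift (sprod K K')) (\<lambda>n x. x) n z"
            by blast
          have zin: "sdmapn (r + s) (lift (sprod K K')) (\<lambda>n x. x) n z \<in> simp (sdn (r + s) (lift (sprod K K'))) n"
            by (rule smapD1[OF smap_sdmapn[OF is_sset_lift[OF is_sset_subs[OF is_sset_sprod[OF K] SB]] smap_lift_incl[OF SB]] z(1)])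
          have v: "pullback (sdn (r + s) (lift (sprod K K'))) (sdmapn (r + s) (lift K) (liftmap (\<lambda>n. fst)))
           (pullback (sdn s (sdn r (lift K))) (gam s (sdn r (lift K))) a) n
           (sdmapn (r + s) (lift (sprod K K')) (\<lambda>n x. x) n z) = restrict (\<lambda>t. 0) (hyper n)"
            by (rule vanish[OF is_sset_sprod[OF K] K(1) SB L smap_fst smap_fst_sub a add.commute z(1)])
          show ?thesis unfolding z(2) mu_def Let_def zmul_def using zin v zero by simp
        qed
        then show ?thesis using True unfolding pullback_def zzero_def by simp
      qed
    qed
    show "mu r s K K' a b \<in> zrel (r + s) (sprod K K') (pair_union K L K' L')"
      unfolding zrel_def using mz kern by simp
  qed
  have part2: "\<forall>(K1 :: 'c sset) (L1 :: nat \<Rightarrow> 'c set) (K1' :: 'd sset) (L1' :: nat \<Rightarrow> 'd set) f f'.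
            finite_sset K1 \<longrightarrow> subsset L1 K1 \<longrightarrow> finite_sset K1' \<longrightarrow> subsset L1' K1' \<longrightarrow>
            smap K1 K f \<longrightarrow> (\<forall>n. f n ` L1 n \<subseteq> L n) \<longrightarrow>
            smap K1' K' f' \<longrightarrow> (\<forall>n. f' n ` L1' n \<subseteq> L' n) \<longrightarrow>
            (\<forall>a \<in> zrel r K L. \<forall>b \<in> zrel s K' L'.
               mu r s K1 K1'
                  (pullback (sdn r (lift K1)) (sdmapn r (lift K) (liftmap f)) a)
                  (pullback (sdn s (lift K1')) (sdmapn s (lift K') (liftmap f')) b)
               = pullback (sdn (r + s) (lift (sprod K1 K1')))
                   (sdmapn (r + s) (lift (sprod K K')) (liftmap (prod_map f f')))
                   (mu r s K K' a b))"
  proof (intro allI impI ballI)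
    fix K1 :: "'c sset" and L1 :: "nat \<Rightarrow> 'c set" and K1' :: "'d sset" and L1' :: "nat \<Rightarrow> 'd set"
      and f f' a b
    assume h: "finite_sset K1" "subsset L1 K1" "finite_sset K1'" "subsset L1' K1'"
      "smap K1 K f" "\<forall>n. f n ` L1 n \<subseteq> L n" "smap K1' K' f'" "\<forall>n. f' n ` L1' n \<subseteq> L' n"
      "a \<in> zrel r K L" "b \<in> zrel s K' L'"
    have K1: "is_sset K1" "is_sset K1'" using h(1,3) unfolding finite_sset_def by auto
    have lP1: "is_sset (lift (sprod K1 K1'))" by (rule is_sset_lift[OF is_sset_sprod[OF K1]])
    have F: "smap (lift (sprod K1 K1')) (lift (sprod K K')) (liftmap (prod_map f f'))"
      by (rule smap_liftmap[OF smap_prod_map[OF h(5) h(7)]])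
    show "mu r s K1 K1'
                  (pullback (sdn r (lift K1)) (sdmapn r (lift K) (liftmap f)) a)
                  (pullback (sdn s (lift K1')) (sdmapn s (lift K') (liftmap f')) b)
               = pullback (sdn (r + s) (lift (sprod K1 K1')))
                   (sdmapn (r + s) (lift (sprod K K')) (liftmap (prod_map f f')))
                   (mu r s K K' a b)"
    proof (rule ext, rule ext)
      fix n x
      show "mu r s K1 K1'
                  (pullback (sdn r (lift K1)) (sdmapn r (lift K) (liftmap f)) a)
                  (pullback (sdn s (lift K1')) (sdmapn s (lift K') (liftmap f')) b) n x
               = pullback (sdn (r + s) (lift (sprod K1 K1')))
                   (sdmapn (r + s) (lift (sprod K K')) (liftmap (prod_map f f')))
                   (mu r s K K' a b) n x"
      proof (cases "x \<in> simp (sdn (r + s) (lift (sprod K1 K1'))) n")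
        case False then show ?thesis unfolding mu_def Let_def zmul_def pullback_def by simp
      next
        case True
        have Fx: "sdmapn (r + s) (lift (sprod K K')) (liftmap (prod_map f f')) n x \<in> simp (sdn (r + s) (lift (sprod K K'))) n"
          by (rule smapD1[OF smap_sdmapn[OF lP1 F] True])
        have A: "\<And>n z. f n (fst z) = fst (prod_map f f' n z)" by (simp add: prod_map_def)
        have B: "\<And>n z. f' n (snd z) = snd (prod_map f f' n z)" by (simp add: prod_map_def)
        have sa: "pullback (sdn (r + s) (lift (sprod K1 K1'))) (sdmapn (r + s) (lift K1) (liftmap (\<lambda>n. fst)))
           (pullback (sdn s (sdn r (lift K1))) (gam s (sdn r (lift K1)))
              (pullback (sdn r (lift K1)) (sdmapn r (lift K) (liftmap f)) a)) n x
         = pullback (sdn (r + s) (lift (sprod K K'))) (sdmapn (r + s) (lift K) (liftmap (\<lambda>n. fst)))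
           (pullback (sdn s (sdn r (lift K))) (gam s (sdn r (lift K))) a) n
           (sdmapn (r + s) (lift (sprod K K')) (liftmap (prod_map f f')) n x)"
          by (rule side[OF K K1 K(1) K1(1) h(5) h(7) h(5) smap_fst smap_fst A refl True])
        have sb: "pullback (sdn (r + s) (lift (sprod K1 K1'))) (sdmapn (r + s) (lift K1') (liftmap (\<lambda>n. snd)))
           (pullback (sdn r (sdn s (lift K1'))) (gam r (sdn s (lift K1')))
              (pullback (sdn s (lift K1')) (sdmapn s (lift K') (liftmap f')) b)) n x
         = pullback (sdn (r + s) (lift (sprod K K'))) (sdmapn (r + s) (lift K') (liftmap (\<lambda>n. snd)))
           (pullback (sdn r (sdn s (lift K'))) (gam r (sdn s (lift K'))) b) n
           (sdmapn (r + s) (lift (sprod K K')) (liftmap (prod_map f f')) n x)"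
          by (rule side[OF K K1 K(2) K1(2) h(5) h(7) h(7) smap_snd smap_snd B add.commute True])
        show ?thesis
          unfolding mu_def Let_def zmul_def pullback_def[of "sdn (r + s) (lift (sprod K1 K1'))" "sdmapn (r + s) (lift (sprod K K')) (liftmap (prod_map f f'))"]
          using True Fx sa sb by simp
      qed
    qed
  qed
  show ?thesis using part1 part2 by blast
qed

end
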